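(* Consider LocalOMD with positive sampling policy $\mu^s$. Let $C_\Psi=\sup_{x\in\mathcal X,\,p\in\Delta_{\mathcal A(x)}}D_x(p,\mu^1(\cdot|x))$ and let $\lambda_1\ge0$ be such that $\frac1{\eta^{t+1}(x)}-\frac1{\eta^t(x)}\le\lambda_1$ for all $x\in\mathcal X$ and $t\in[T]$. Then for all $t\in[T]$ and $h\in[H]$, \[\tilde\ell^t_h(a^t_h)\le(1+\lambda_1C_\Psi)\,\kappa(\mu^s|x^t_h).\]
   Context: Game structure. Fix an integer $H\ge1$. The min-player's information sets form a finite set $\mathcal X$; each $x$ has a depth $h(x)\in\{1,\dots,H\}$ and a finite nonempty action set $\mathcal A(x)$. Perfect recall: every $x$ of depth $h$ has a unique history $(x_1,a_1,\dots,x_{h-1},a_{h-1},x_h=x)$ with $x_i$ of depth $i$, $a_i\in\mathcal A(x_i)$; $x'$ directly follows $(x,a)$ if $h(x')=h(x)+1$ and the history of $x'$ contains $x$ followed by $a$; $x$ is in the history of $x'$ if $x=x'_i$ for some $i$ (including $x=x'$). A policy is $\mu=(\mu(\cdot|x))_x$ with $\mu(\cdot|x)\in\Delta_{\mathcal A(x)}$; $\Pi_{\min}$ the set of policies; positive if all $\mu(a|x)>0$. For $x$ of depth $h$ and $(x',a')$ with $x$ in the history of $x'$, $x'$ of depth $h'$ with history $(x'_1,a'_1,\dots,x'_{h'})$, $a'_{h'}=a'$: $\mu_{h:}(x',a')=\prod_{i=h}^{h'}\mu(a'_i|x'_i)$. $\kappa(\mu^s|x)=\max_{\mu\in\Pi_{\min}}\sum_{x':\,x\text{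 in history of }x'}\sum_{a'\in\mathcal A(x')}\mu_{h:}(x',a')/\mu^s_{h:}(x',a')$. Trajectories: at each round $t$ the min-player observes $(x^t_h,a^t_h,\ell^t_h)_{h=1}^H$ with $x^t_h$ of depth $h$, $a^t_h\in\mathcal A(x^t_h)$, $x^t_{h+1}$ directly following $(x^t_h,a^t_h)$, and $\ell^t_h\in[0,1]$. LocalOMD. For each $x$, $\Psi_x$ is a Legendre function on a closed convex set $\overline{\Omega_x}\subset\mathbb R^{|\mathcal A(x)|}_{\ge0}$ containing $\Delta_{\mathcal A(x)}$ (interior $\Omega_x$), with Bregman divergence $D_x(p,q)=\Psi_x(p)-\Psi_x(q)-\langle\nabla\Psi_x(q),p-q\rangle$. Learning rates $\eta^t(x)>0$ ($t=1,\dots,T+1$), non-increasing in $t$, with $\eta^{t+1}(x)=\eta^t(x)$ whenever $x\ne x^t_{h(x)}$. Given $\mu^1$ with $\mu^1(\cdot|x)\in\Omega_x$, at round $t$: $q^t_{H+1}=0$; for $h=H,\dots,1$, with $x=x^t_h$, $\tilde\ell^t_h\in\mathbb R^{\mathcal A(x)}$, $\tilde\ell^t_h(a)=\mathbf 1\{a=a^t_h\}(\ell^t_h+q^t_{h+1})/\mu^s(a^t_h|x)$, $h^t_x(p)=\langle\tilde\ell^t_h,p\rangle+\frac1{\eta^t(x)}D_x(p,\mu^t(\cdot|x))+\big(\frac1{\eta^{t+1}(x)}-\frac1{\eta^t(x)}\big)D_x(p,\mu^1(\cdot|x))$ on $\Delta_{\mathcal A(x)}$, $\mu^{t+1}(\cdot|x)=\arg\min_{\Delta_{\mathcal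 A(x)}}h^t_x$ (assumed to exist uniquely in $\Omega_x$), $q^t_h=\min_{\Delta_{\mathcal A(x)}}h^t_x$; for $x$ not on the trajectory, $\mu^{t+1}(\cdot|x)=\mu^t(\cdot|x)$. *)

theory Defs
  imports "HOL-Analysis.Analysis"
begin

text \<open>The tree structure is encoded by a parent map: for an information set x of
depth h > 1, par x = Some (y, b) means that the history of x ends with y followed
by action b (y has depth h-1). Iterating par yields the unique history.\<close>

definition game_structure ::
  "'x set \<Rightarrow> nat \<Rightarrow> ('x \<Rightarrow> nat) \<Rightarrow> ('x \<Rightarrow> 'a set) \<Rightarrow> ('x \<Rightarrow> ('x \<times> 'a) option) \<Rightarrow> bool" where
  "game_structure X H depth A par \<longleftrightarrow>
     finite X \<and> 1 \<le> H \<and>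
     (\<forall>x\<in>X. depth x \<in> {1..H} \<and> finite (A x) \<and> A x \<noteq> {} \<and>
        (depth x = 1 \<longrightarrow> par x = None) \<and>
        (1 < depth x \<longrightarrow> (\<exists>y b. par x = Some (y, b) \<and> y \<in> X \<and>
                                    depth y = depth x - 1 \<and> b \<in> A y)))"

definition hstep :: "('x \<Rightarrow> ('x \<times> 'a) option) \<Rightarrow> 'x \<times> 'a \<Rightarrow> 'x \<times> 'a" where
  "hstep par p = the (par (fst p))"

text \<open>k steps back: the pair (x'_{h'-k}, a'_{h'-k}) of the history of (x', a').\<close>
definition hpair :: "('x \<Rightarrow> ('x \<times> 'a) option) \<Rightarrow> nat \<Rightarrow> 'x \<times> 'a \<Rightarrow> 'x \<times> 'a" where
  "hpair par k p = (hstep par ^^ k) p"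

definition in_history ::
  "('x \<Rightarrow> ('x \<times> 'a) option) \<Rightarrow> ('x \<Rightarrow> nat) \<Rightarrow> 'x \<Rightarrow> 'x \<Rightarrow> bool" where
  "in_history par depth x x' \<longleftrightarrow>
     (\<exists>k < depth x'. \<exists>a. fst (hpair par k (x', a)) = x)"

text \<open>mu_{h:}(x',a') = prod_{i=h}^{h'} mu(a'_i | x'_i), with h = depth x, h' = depth x'.\<close>
definition mu_from ::
  "('x \<Rightarrow> ('x \<times> 'a) option) \<Rightarrow> ('x \<Rightarrow> nat) \<Rightarrow> ('x \<Rightarrow> 'a \<Rightarrow> real) \<Rightarrow> 'x \<Rightarrow> 'x \<Rightarrow> 'a \<Rightarrow> real" where
  "mu_from par depth \<mu> x x' a' =
     (\<Prod>k\<in>{0..depth x' - depth x}. \<mu> (fst (hpair par k (x', a'))) (snd (hpair par k (x', a'))))"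

definition prob_simplex :: "'a set \<Rightarrow> ('a \<Rightarrow> real) set" where
  "prob_simplex A = {p. (\<forall>a\<in>A. 0 \<le> p a) \<and> (\<forall>a. a \<notin> A \<longrightarrow> p a = 0) \<and> sum p A = 1}"

definition policy :: "'x set \<Rightarrow> ('x \<Rightarrow> 'a set) \<Rightarrow> ('x \<Rightarrow> 'a \<Rightarrow> real) \<Rightarrow> bool" where
  "policy X A \<mu> \<longleftrightarrow> (\<forall>x\<in>X. \<mu> x \<in> prob_simplex (A x))"

definition positive_policy :: "'x set \<Rightarrow> ('x \<Rightarrow> 'a set) \<Rightarrow> ('x \<Rightarrow> 'a \<Rightarrow> real) \<Rightarrow> bool" where
  "positive_policy X A \<mu> \<longleftrightarrow> policy X A \<mu> \<and> (\<forall>x\<in>X. \<forall>a\<in>A x. 0 < \<mu> x a)"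

text \<open>kappa(mu^s | x) (the maximum over policies, written as a supremum).\<close>
definition kappa ::
  "'x set \<Rightarrow> ('x \<Rightarrow> 'a set) \<Rightarrow> ('x \<Rightarrow> nat) \<Rightarrow> ('x \<Rightarrow> ('x \<times> 'a) option) \<Rightarrow>
   ('x \<Rightarrow> 'a \<Rightarrow> real) \<Rightarrow> 'x \<Rightarrow> real" where
  "kappa X A depth par \<mu>s x =
     Sup ((\<lambda>\<mu>. \<Sum>x'\<in>{x'\<in>X. in_history par depth x x'}. \<Sum>a'\<in>A x'.
              mu_from par depth \<mu> x x' a' / mu_from par depth \<mu>s x x' a')
          ` {\<mu>. policy X A \<mu>})"

text \<open>R^{A} is identified with the coordinate subspace of real^'a of vectors
vanishing outside A.\<close>
definition coord_space :: "'a set \<Rightarrow> (real^'a::finite) set" where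
  "coord_space A = {v. \<forall>a. a \<notin> A \<longrightarrow> v $ a = 0}"

definition interior_in :: "'a set \<Rightarrow> (real^'a::finite) set \<Rightarrow> (real^'a) set" where
  "interior_in A C = (top_of_set (coord_space A)) interior_of C"

definition strictly_convex_on :: "('b::real_vector) set \<Rightarrow> ('b \<Rightarrow> real) \<Rightarrow> bool" where
  "strictly_convex_on S f \<longleftrightarrow>
     (\<forall>x\<in>S. \<forall>y\<in>S. x \<noteq> y \<longrightarrow> (\<forall>u::real. 0 < u \<longrightarrow> u < 1 \<longrightarrow>
        f ((1 - u) *\<^sub>R x + u *\<^sub>R y) < (1 - u) * f x + u * f y))"

text \<open>Psi is a Legendre function on the closed convex set C (closure of its domain),
C \<subseteq> R^{A}_{\<ge>0}, prob_simplex \<subseteq> C, with gradient grad on the interior of C.\<close>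
definition legendre ::
  "'a set \<Rightarrow> (real^'a::finite \<Rightarrow> real) \<Rightarrow> (real^'a) set \<Rightarrow> (real^'a \<Rightarrow> real^'a) \<Rightarrow> bool" where
  "legendre A Psi C grad \<longleftrightarrow>
     C \<subseteq> coord_space A \<and> closed C \<and> convex C \<and>
     C \<subseteq> {v. \<forall>a\<in>A. 0 \<le> v $ a} \<and>
     vec_lambda ` prob_simplex A \<subseteq> C \<and>
     interior_in A C \<noteq> {} \<and>
     convex_on C Psi \<and>
     strictly_convex_on (interior_in A C) Psi \<and>
     (\<forall>q\<in>interior_in A C. grad q \<in> coord_space A \<and>
        (Psi has_derivative (\<lambda>h. grad q \<bullet> h)) (at q within coord_space A)) \<and>
     (\<forall>s z. (\<forall>n. s n \<in> interior_in A C) \<longrightarrow> s \<longlonglongrightarrow> z \<longrightarrow> z \<in> C - interior_in A C \<longrightarrow>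
        filterlim (\<lambda>n. norm (grad (s n))) at_top sequentially)"

definition bregman :: "(real^'a::finite \<Rightarrow> real) \<Rightarrow> (real^'a \<Rightarrow> real^'a) \<Rightarrow> real^'a \<Rightarrow> real^'a \<Rightarrow> real" where
  "bregman Psi grad p q = Psi p - Psi q - grad q \<bullet> (p - q)"

definition omd_obj ::
  "('x \<Rightarrow> 'a set) \<Rightarrow> ('x \<Rightarrow> real^'a::finite \<Rightarrow> real^'a \<Rightarrow> real) \<Rightarrow> (nat \<Rightarrow> 'x \<Rightarrow> real) \<Rightarrow>
   (nat \<Rightarrow> 'x \<Rightarrow> 'a \<Rightarrow> real) \<Rightarrow> ('a \<Rightarrow> real) \<Rightarrow> nat \<Rightarrow> 'x \<Rightarrow> ('a \<Rightarrow> real) \<Rightarrow> real" where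
  "omd_obj A D \<eta> \<mu> lt t x p =
     (\<Sum>a\<in>A x. lt a * p a)
     + (1 / \<eta> t x) * D x (vec_lambda p) (vec_lambda (\<mu> t x))
     + (1 / \<eta> (Suc t) x - 1 / \<eta> t x) * D x (vec_lambda p) (vec_lambda (\<mu> 1 x))"

definition loss_est ::
  "(nat \<Rightarrow> nat \<Rightarrow> 'x) \<Rightarrow> (nat \<Rightarrow> nat \<Rightarrow> 'a) \<Rightarrow> (nat \<Rightarrow> nat \<Rightarrow> real) \<Rightarrow>
   (nat \<Rightarrow> nat \<Rightarrow> real) \<Rightarrow> ('x \<Rightarrow> 'a \<Rightarrow> real) \<Rightarrow> nat \<Rightarrow> nat \<Rightarrow> 'a \<Rightarrow> real" where
  "loss_est tx ta L q \<mu>s t h a =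
     (if a = ta t h then (L t h + q t (Suc h)) / \<mu>s (tx t h) (ta t h) else 0)"

end

theory Submission
  imports Defs
begin

lemma hpair_Suc: "hpair par (Suc k) p = hstep par (hpair par k p)"
  by (simp add: hpair_def)

lemma hpair_0: "hpair par 0 p = p"
  by (simp add: hpair_def)

lemma hpair_X:
  assumes g: "game_structure X H depth A par" and x': "x' \<in> X"
  shows "k < depth x' \<Longrightarrow> fst (hpair par k (x',a')) \<in> X \<and> depth (fst (hpair par k (x',a'))) = depth x' - k
     \<and> (0 < k \<longrightarrow> snd (hpair par k (x',a')) \<in> A (fst (hpair par k (x',a'))))"
proof (induction k)
  case 0
  then show ?case using x' by (simp add: hpair_0)
next
  case (Suc k)
  then have IH: "fst (hpair par k (x',a')) \<in> X" "depth (fst (hpair par k (x',a'))) = depth x' - k" by auto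
  define y where "y = fst (hpair par k (x',a'))"
  have "1 < depth y" using IH Suc.prems y_def by auto
  then obtain z b where zb: "par y = Some (z, b)" "z \<in> X" "depth z = depth y - 1" "b \<in> A z"
    using g IH(1) unfolding game_structure_def y_def by blast
  have "hpair par (Suc k) (x',a') = (z,b)" using zb by (simp add: hpair_Suc hstep_def y_def)
  then show ?case using zb IH y_def by auto
qed

lemma simplex_bounds:
  assumes "p \<in> prob_simplex A" "finite A"
  shows "0 \<le> p a \<and> p a \<le> 1"
proof (cases "a \<in> A")
  case True
  have "p a \<le> sum p A" using assms True by (intro member_le_sum) (auto simp: prob_simplex_def)
  then show ?thesis using assms True by (auto simp: prob_simplex_def)
next
  case False
  then show ?thesis using assms by (auto simp: prob_simplex_def)
qed

lemma policy_bounds: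
  assumes g: "game_structure X H depth A par" and "policy X A \<mu>" "y \<in> X"
  shows "0 \<le> \<mu> y b \<and> \<mu> y b \<le> 1"
  using assms simplex_bounds[of "\<mu> y" "A y" b] by (auto simp: policy_def game_structure_def)

lemma mu_from_bounds:
  assumes g: "game_structure X H depth A par" and "policy X A \<mu>" "x \<in> X" "x' \<in> X"
  shows "0 \<le> mu_from par depth \<mu> x x' a' \<and> mu_from par depth \<mu> x x' a' \<le> 1"
proof -
  have "1 \<le> depth x" "1 \<le> depth x'" using g assms by (auto simp: game_structure_def)
  then have k: "\<And>k. k \<in> {0..depth x' - depth x} \<Longrightarrow> fst (hpair par k (x',a')) \<in> X"
    using hpair_X[OF g assms(4)] by (metis atLeastAtMost_iff diff_less le_less_trans less_le_trans
        less_one not_le zero_less_diff)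
  show ?thesis unfolding mu_from_def
    using policy_bounds[OF g assms(2)] k by (auto intro!: prod_nonneg prod_le_1)
qed

lemma kappa_ge:
  assumes g: "game_structure X H depth A par" and s: "policy X A \<mu>s" and pol: "policy X A \<mu>" and x: "x \<in> X"
  shows "(\<Sum>x'\<in>{x'\<in>X. in_history par depth x x'}. \<Sum>a'\<in>A x'.
              mu_from par depth \<mu> x x' a' / mu_from par depth \<mu>s x x' a') \<le> kappa X A depth par \<mu>s x"
  unfolding kappa_def
proof (rule cSup_upper)
  show "(\<Sum>x'\<in>{x'\<in>X. in_history par depth x x'}. \<Sum>a'\<in>A x'.
              mu_from par depth \<mu> x x' a' / mu_from par depth \<mu>s x x' a') \<in> (\<lambda>\<mu>. \<Sum>x'\<in>{x'\<in>X. in_history par depth x x'}. \<Sum>a'\<in>A x'.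
              mu_from par depth \<mu> x x' a' / mu_from par depth \<mu>s x x' a')
          ` {\<mu>. policy X A \<mu>}" using pol by blast
  show "bdd_above ((\<lambda>\<mu>. \<Sum>x'\<in>{x'\<in>X. in_history par depth x x'}. \<Sum>a'\<in>A x'.
              mu_from par depth \<mu> x x' a' / mu_from par depth \<mu>s x x' a')
          ` {\<mu>. policy X A \<mu>})"
  proof (rule bdd_aboveI2)
    fix \<nu> assume "\<nu> \<in> {\<mu>. policy X A \<mu>}"
    then have nu: "policy X A \<nu>" by simp
    show "(\<Sum>x'\<in>{x'\<in>X. in_history par depth x x'}. \<Sum>a'\<in>A x'.
              mu_from par depth \<nu> x x' a' / mu_from par depth \<mu>s x x' a')
       \<le> (\<Sum>x'\<in>{x'\<in>X. in_history par depth x x'}. \<Sum>a'\<in>A x'. 1 / mu_from par depth \<mu>s x x' a')"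
    proof (intro sum_mono)
      fix x' a' assume x': "x' \<in> {x'\<in>X. in_history par depth x x'}"
      have n: "mu_from par depth \<nu> x x' a' \<le> 1" using mu_from_bounds[OF g nu x] x' by auto
      have d: "0 \<le> mu_from par depth \<mu>s x x' a'" using mu_from_bounds[OF g s x] x' by auto
      have "mu_from par depth \<nu> x x' a' * inverse (mu_from par depth \<mu>s x x' a')
           \<le> 1 * inverse (mu_from par depth \<mu>s x x' a')"
        using n d by (intro mult_right_mono) auto
      then show "mu_from par depth \<nu> x x' a' / mu_from par depth \<mu>s x x' a' \<le> 1 / mu_from par depth \<mu>s x x' a'"
        by (simp add: divide_inverse)
    qed
  qed
qed

lemma traj_hpair:
  assumes tr: "\<forall>h\<in>{1..H}. h < H \<longrightarrow> par (tx (Suc h)) = Some (tx h, ta h)"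
    and h': "h' \<le> H"
  shows "k < h' \<Longrightarrow> hpair par k (tx h', ta h') = (tx (h' - k), ta (h' - k))"
proof (induction k)
  case 0
  then show ?case by (simp add: hpair_0)
next
  case (Suc k)
  then have IH: "hpair par k (tx h', ta h') = (tx (h' - k), ta (h' - k))" by simp
  have "par (tx (Suc (h' - Suc k))) = Some (tx (h' - Suc k), ta (h' - Suc k))"
    using tr[rule_format, of "h' - Suc k"] Suc.prems h' by auto
  moreover have "Suc (h' - Suc k) = h' - k" using Suc.prems by simp
  ultimately show ?case using IH by (simp add: hpair_Suc hstep_def)
qed

lemma simplex_norm:
  fixes p :: "'a::finite \<Rightarrow> real"
  assumes "p \<in> prob_simplex A"
  shows "norm (vec_lambda p) \<le> 1"
proof -
  have "norm (vec_lambda p) \<le> (\<Sum>i\<in>UNIV. \<bar>vec_lambda p $ i\<bar>)" by (rule norm_le_l1_cart)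
  also have "\<dots> = (\<Sum>i\<in>UNIV. p i)"
  proof (intro sum.cong refl)
    fix i show "\<bar>vec_lambda p $ i\<bar> = p i"
      using assms by (cases "i \<in> A") (auto simp: prob_simplex_def)
  qed
  also have "\<dots> = sum p A"
    using assms by (intro sum.mono_neutral_right) (auto simp: prob_simplex_def)
  finally show ?thesis using assms by (simp add: prob_simplex_def)
qed

lemma simplex_vec_sum:
  fixes p :: "'a::finite \<Rightarrow> real"
  assumes "p \<in> prob_simplex A"
  shows "vec_lambda p = (\<Sum>a\<in>A. p a *\<^sub>R axis a 1)"
proof (rule vec_eq_iff[THEN iffD2], rule allI)
  fix i
  have "(\<Sum>a\<in>A. p a *\<^sub>R axis a (1::real)) $ i = (\<Sum>a\<in>A. p a * (if i = a then 1 else 0))"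
    by (simp add: sum_component axis_def)
  also have "\<dots> = (if i \<in> A then p i else 0)"
    by (simp add: sum.delta' if_distrib cong: if_cong) 
  also have "\<dots> = p i" using assms by (auto simp: prob_simplex_def)
  finally show "vec_lambda p $ i = (\<Sum>a\<in>A. p a *\<^sub>R axis a 1) $ i" by simp
qed

lemma Psi_simplex_bound:
  fixes p :: "'a::finite \<Rightarrow> real"
  assumes leg: "legendre A Psi C grad" and p: "p \<in> prob_simplex A"
  shows "Psi (vec_lambda p) \<le> (\<Sum>a\<in>A. \<bar>Psi (axis a 1)\<bar>)"
proof -
  have fin: "finite A" by simp
  have ne: "A \<noteq> {}" using p by (auto simp: prob_simplex_def)
  have cv: "convex_on C Psi" and sub: "vec_lambda ` prob_simplex A \<subseteq> C"
    using leg by (auto simp: legendre_def)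
  have ax: "axis a (1::real) \<in> C" if "a \<in> A" for a
  proof -
    have "(\<lambda>b. if b = a then 1 else 0) \<in> prob_simplex A" using that
      by (auto simp: prob_simplex_def)
    moreover have "axis a (1::real) = vec_lambda (\<lambda>b. if b = a then 1 else 0)"
      by (simp add: axis_def)
    ultimately show ?thesis using sub by auto
  qed
  have "Psi (vec_lambda p) = Psi (\<Sum>a\<in>A. p a *\<^sub>R axis a 1)" using simplex_vec_sum[OF p] by simp
  also have "\<dots> \<le> (\<Sum>a\<in>A. p a * Psi (axis a 1))"
    using p ax by (intro convex_on_sum[OF fin ne cv]) (auto simp: prob_simplex_def)
  also have "\<dots> \<le> (\<Sum>a\<in>A. \<bar>Psi (axis a 1)\<bar>)"
  proof (intro sum_mono)
    fix a assume "a \<in> A"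
    have "0 \<le> p a \<and> p a \<le> 1" using simplex_bounds[OF p fin] by simp
    then have "p a * Psi (axis a 1) \<le> p a * \<bar>Psi (axis a 1)\<bar>" by (simp add: mult_left_mono)
    also have "\<dots> \<le> 1 * \<bar>Psi (axis a 1)\<bar>" using \<open>0 \<le> p a \<and> p a \<le> 1\<close> by (intro mult_right_mono) auto
    finally show "p a * Psi (axis a 1) \<le> \<bar>Psi (axis a 1)\<bar>" by simp
  qed
  finally show ?thesis .
qed

lemma bregman_bound:
  fixes p :: "'a::finite \<Rightarrow> real"
  assumes leg: "legendre A Psi C grad" and p: "p \<in> prob_simplex A" and m: "m \<in> prob_simplex A"
  shows "bregman Psi grad (vec_lambda p) (vec_lambda m) \<le>
     (\<Sum>a\<in>A. \<bar>Psi (axis a 1)\<bar>) + \<bar>Psi (vec_lambda m)\<bar> + 2 * norm (grad (vec_lambda m))"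
proof -
  have n: "norm (vec_lambda p - vec_lambda m) \<le> 2"
    using simplex_norm[OF p] simplex_norm[OF m] norm_triangle_ineq4[of "vec_lambda p" "vec_lambda m"] by linarith
  have "- (grad (vec_lambda m) \<bullet> (vec_lambda p - vec_lambda m)) \<le> norm (grad (vec_lambda m)) * norm (vec_lambda p - vec_lambda m)"
    using norm_cauchy_schwarz[of "grad (vec_lambda m)" "-(vec_lambda p - vec_lambda m)"]
    by (simp only: inner_minus_right norm_minus_cancel)
  also have "\<dots> \<le> norm (grad (vec_lambda m)) * 2" using n by (intro mult_left_mono) auto
  finally show ?thesis using Psi_simplex_bound[OF leg p] unfolding bregman_def by linarith
qed

lemma bregman_same: "bregman Psi grad v v = 0" by (simp add: bregman_def)

lemma prod_rev_reindex:
  fixes g :: "nat \<Rightarrow> real"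
  assumes "h \<le> j"
  shows "(\<Prod>k\<in>{0..j-h}. g (j-k)) = (\<Prod>l\<in>{h..j}. g l)"
  by (rule prod.reindex_bij_witness[of _ "\<lambda>l. j - l" "\<lambda>k. j - k"]) (use assms in auto)

lemma policies_all:
  assumes g: "game_structure X H depth A par"
    and init: "policy X A (\<mu> 1)"
    and stp: "\<And>t x. t \<in> {1..T} \<Longrightarrow> x \<in> X \<Longrightarrow> x = tx t (depth x) \<Longrightarrow> \<mu> (Suc t) x \<in> prob_simplex (A x)"
    and off: "\<forall>t\<in>{1..T}. \<forall>x\<in>X. x \<noteq> tx t (depth x) \<longrightarrow> \<mu> (Suc t) x = \<mu> t x"
  shows "1 \<le> n \<Longrightarrow> n \<le> Suc T \<Longrightarrow> policy X A (\<mu> n)"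
proof (induction n)
  case 0 then show ?case by simp
next
  case (Suc n)
  show ?case
  proof (cases "n = 0")
    case True then show ?thesis using init by simp
  next
    case False
    then have n: "n \<in> {1..T}" using Suc.prems by auto
    have IH: "policy X A (\<mu> n)" using Suc.IH Suc.prems False by auto
    show ?thesis unfolding policy_def
    proof
      fix x assume x: "x \<in> X"
      show "\<mu> (Suc n) x \<in> prob_simplex (A x)"
      proof (cases "x = tx n (depth x)")
        case True then show ?thesis using stp[OF n x] by simp
      next
        case False then show ?thesis using off n x IH by (auto simp: policy_def)
      qed
    qed
  qed
qed

theorem mainTheorem4:
  fixes X :: "'x set" and H T :: nat and depth :: "'x \<Rightarrow> nat"
    and A :: "'x \<Rightarrow> 'a::finite set" and par :: "'x \<Rightarrow> ('x \<times> 'a) option"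
    and tx :: "nat \<Rightarrow> nat \<Rightarrow> 'x" and ta :: "nat \<Rightarrow> nat \<Rightarrow> 'a" and L :: "nat \<Rightarrow> nat \<Rightarrow> real"
    and Psi :: "'x \<Rightarrow> real^'a \<Rightarrow> real" and Cl :: "'x \<Rightarrow> (real^'a) set"
    and grad :: "'x \<Rightarrow> real^'a \<Rightarrow> real^'a"
    and \<eta> :: "nat \<Rightarrow> 'x \<Rightarrow> real" and \<mu> :: "nat \<Rightarrow> 'x \<Rightarrow> 'a \<Rightarrow> real"
    and \<mu>s :: "'x \<Rightarrow> 'a \<Rightarrow> real" and q :: "nat \<Rightarrow> nat \<Rightarrow> real"
    and lam1 CPsi :: real
  defines "D \<equiv> \<lambda>x. bregman (Psi x) (grad x)"
  assumes game: "game_structure X H depth A par"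
    and traj: "\<forall>t\<in>{1..T}. \<forall>h\<in>{1..H}. tx t h \<in> X \<and> depth (tx t h) = h \<and>
                 ta t h \<in> A (tx t h) \<and> 0 \<le> L t h \<and> L t h \<le> 1 \<and>
                 (h < H \<longrightarrow> par (tx t (Suc h)) = Some (tx t h, ta t h))"
    and leg: "\<forall>x\<in>X. legendre (A x) (Psi x) (Cl x) (grad x)"
    and eta_pos: "\<forall>t\<in>{1..Suc T}. \<forall>x\<in>X. 0 < \<eta> t x"
    and eta_noninc: "\<forall>t\<in>{1..T}. \<forall>x\<in>X. \<eta> (Suc t) x \<le> \<eta> t x"
    and eta_local: "\<forall>t\<in>{1..T}. \<forall>x\<in>X. x \<noteq> tx t (depth x) \<longrightarrow> \<eta> (Suc t) x = \<eta> t x"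
    and samp: "positive_policy X A \<mu>s"
    and init: "policy X A (\<mu> 1)" "\<forall>x\<in>X. vec_lambda (\<mu> 1 x) \<in> interior_in (A x) (Cl x)"
    and q_last: "\<forall>t\<in>{1..T}. q t (Suc H) = 0"
    and step: "\<forall>t\<in>{1..T}. \<forall>h\<in>{1..H}.
        (let x = tx t h; obj = omd_obj A D \<eta> \<mu> (loss_est tx ta L q \<mu>s t h) t x in
           \<mu> (Suc t) x \<in> prob_simplex (A x) \<and>
           vec_lambda (\<mu> (Suc t) x) \<in> interior_in (A x) (Cl x) \<and>
           (\<forall>p\<in>prob_simplex (A x). obj (\<mu> (Suc t) x) \<le> obj p) \<and>
           (\<forall>p\<in>prob_simplex (A x). obj p \<le> obj (\<mu> (Suc t) x) \<longrightarrow> p = \<mu> (Suc t) x) \<and>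
           q t h = obj (\<mu> (Suc t) x))"
    and off_traj: "\<forall>t\<in>{1..T}. \<forall>x\<in>X. x \<noteq> tx t (depth x) \<longrightarrow> \<mu> (Suc t) x = \<mu> t x"
    and C_def: "CPsi = Sup {D x (vec_lambda p) (vec_lambda (\<mu> 1 x)) | x p. x \<in> X \<and> p \<in> prob_simplex (A x)}"
    and lam_nonneg: "0 \<le> lam1"
    and lam_bound: "\<forall>x\<in>X. \<forall>t\<in>{1..T}. 1 / \<eta> (Suc t) x - 1 / \<eta> t x \<le> lam1"
  shows "\<forall>t\<in>{1..T}. \<forall>h\<in>{1..H}.
           loss_est tx ta L q \<mu>s t h (ta t h) \<le> (1 + lam1 * CPsi) * kappa X A depth par \<mu>s (tx t h)"
proof (intro ballI)
  fix t h assume t: "t \<in> {1..T}" and h: "h \<in> {1..H}"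
  have finX: "finite X" and finA: "\<And>x. x \<in> X \<Longrightarrow> finite (A x)"
    using game by (auto simp: game_structure_def)
  have trt: "\<forall>h\<in>{1..H}. h < H \<longrightarrow> par (tx t (Suc h)) = Some (tx t h, ta t h)"
    using traj[rule_format, OF t] by simp
  have trj: "\<And>i. i \<in> {1..H} \<Longrightarrow> tx t i \<in> X \<and> depth (tx t i) = i \<and> ta t i \<in> A (tx t i) \<and> 0 \<le> L t i \<and> L t i \<le> 1"
  proof -
    fix i assume i: "i \<in> {1..H}"
    show "tx t i \<in> X \<and> depth (tx t i) = i \<and> ta t i \<in> A (tx t i) \<and> 0 \<le> L t i \<and> L t i \<le> 1"
      using traj[rule_format, OF t i] by simp
  qed
  have stp: "\<And>t x. t \<in> {1..T} \<Longrightarrow> x \<in> X \<Longrightarrow> x = tx t (depth x) \<Longrightarrow> \<mu> (Suc t) x \<in> prob_simplex (A x)"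
  proof -
    fix t x assume t: "t \<in> {1..T}" and x: "x \<in> X" and e: "x = tx t (depth x)"
    have d: "depth x \<in> {1..H}" using game x by (auto simp: game_structure_def)
    note st0 = bspec[OF bspec[OF step t] d]
    note st = st0[unfolded Let_def]
    have "\<mu> (Suc t) (tx t (depth x)) \<in> prob_simplex (A (tx t (depth x)))"
      using st by (rule conjunct1)
    with e show "\<mu> (Suc t) x \<in> prob_simplex (A x)"
      by (rule ssubst[where P = "\<lambda>z. \<mu> (Suc t) z \<in> prob_simplex (A z)"])
  qed
  have polt: "policy X A (\<mu> t)"
    by (rule policies_all[OF game init(1) stp off_traj]) (use t in auto)
  have pol1: "policy X A (\<mu> 1)" using init(1) .
  define S where "S = {D x (vec_lambda p) (vec_lambda (\<mu> 1 x)) | x p. x \<in> X \<and> p \<in> prob_simplex (A x)}"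
  define B where "B = (\<lambda>x. (\<Sum>a\<in>A x. \<bar>Psi x (axis a 1)\<bar>) + \<bar>Psi x (vec_lambda (\<mu> 1 x))\<bar> + 2 * norm (grad x (vec_lambda (\<mu> 1 x))))"
  have Bnn: "\<And>x. 0 \<le> B x" unfolding B_def by (intro add_nonneg_nonneg sum_nonneg) auto
  have bddS: "bdd_above S"
  proof (rule bdd_aboveI)
    fix y assume "y \<in> S"
    then obtain x p where y: "y = D x (vec_lambda p) (vec_lambda (\<mu> 1 x))" and x: "x \<in> X" and p: "p \<in> prob_simplex (A x)"
      unfolding S_def by blast
    have "y \<le> B x" unfolding y D_def B_def
      using bregman_bound[OF _ p] leg x pol1 by (auto simp: policy_def)
    also have "\<dots> \<le> sum B X" using finX x Bnn by (intro member_le_sum) auto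
    finally show "y \<le> sum B X" .
  qed
  have CS: "CPsi = Sup S" using C_def S_def by simp
  have Dle: "\<And>x p. x \<in> X \<Longrightarrow> p \<in> prob_simplex (A x) \<Longrightarrow> D x (vec_lambda p) (vec_lambda (\<mu> 1 x)) \<le> CPsi"
    unfolding CS by (rule cSup_upper[OF _ bddS]) (auto simp: S_def)
  have C0: "0 \<le> CPsi"
  proof -
    have "tx t h \<in> X" using trj h by blast
    then have "D (tx t h) (vec_lambda (\<mu> 1 (tx t h))) (vec_lambda (\<mu> 1 (tx t h))) \<le> CPsi"
      using Dle pol1 by (auto simp: policy_def)
    then show ?thesis by (simp add: D_def bregman_same)
  qed
  define K where "K = 1 + lam1 * CPsi"
  have K1: "1 \<le> K" unfolding K_def using C0 lam_nonneg by simp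
  define ell where "ell = (\<lambda>i. loss_est tx ta L q \<mu>s t i (ta t i))"
  define m where "m = (\<lambda>i. \<mu> t (tx t i) (ta t i))"
  define s where "s = (\<lambda>i. \<mu>s (tx t i) (ta t i))"
  have ell_eq: "\<And>i. ell i = (L t i + q t (Suc i)) / s i" by (simp add: ell_def s_def loss_est_def)
  have spos: "\<And>i. i \<in> {1..H} \<Longrightarrow> 0 < s i" using samp trj unfolding s_def positive_policy_def by blast
  have mb: "\<And>i. i \<in> {1..H} \<Longrightarrow> 0 \<le> m i \<and> m i \<le> 1"
    unfolding m_def using policy_bounds[OF game polt] trj by blast
  have Q: "\<And>i. i \<in> {1..H} \<Longrightarrow> q t i \<le> ell i * m i + lam1 * CPsi"
  proof -
    fix i assume i: "i \<in> {1..H}"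
    define x where "x = tx t i"
    define obj where "obj = omd_obj A D \<eta> \<mu> (loss_est tx ta L q \<mu>s t i) t x"
    have xX: "x \<in> X" and ai: "ta t i \<in> A x" using trj i x_def by auto
    have mt: "\<mu> t x \<in> prob_simplex (A x)" using polt xX by (simp add: policy_def)
    have st: "q t i = obj (\<mu> (Suc t) x) \<and> obj (\<mu> (Suc t) x) \<le> obj (\<mu> t x)"
      using step[rule_format, OF t i] mt unfolding Let_def x_def[symmetric] obj_def[symmetric] by blast
    define c where "c = 1 / \<eta> (Suc t) x - 1 / \<eta> t x"
    have etas: "0 < \<eta> (Suc t) x" "0 < \<eta> t x" "\<eta> (Suc t) x \<le> \<eta> t x"
      using eta_pos eta_noninc t xX by auto
    have c0: "0 \<le> c" unfolding c_def using etas by (simp add: frac_le)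
    have cl: "c \<le> lam1" unfolding c_def using lam_bound t xX by auto
    have Dx: "D x (vec_lambda (\<mu> t x)) (vec_lambda (\<mu> 1 x)) \<le> CPsi" using Dle xX mt by blast
    have "c * D x (vec_lambda (\<mu> t x)) (vec_lambda (\<mu> 1 x)) \<le> c * CPsi" using Dx c0 by (rule mult_left_mono)
    also have "\<dots> \<le> lam1 * CPsi" using cl C0 by (rule mult_right_mono)
    finally have cD: "c * D x (vec_lambda (\<mu> t x)) (vec_lambda (\<mu> 1 x)) \<le> lam1 * CPsi" .
    have sumeq: "(\<Sum>a\<in>A x. loss_est tx ta L q \<mu>s t i a * \<mu> t x a) = ell i * m i"
    proof -
      have "(\<Sum>a\<in>A x. loss_est tx ta L q \<mu>s t i a * \<mu> t x a) = (\<Sum>a\<in>A x. if ta t i = a then ell i * \<mu> t x a else 0)"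
        by (intro sum.cong) (auto simp: loss_est_def ell_def)
      also have "\<dots> = ell i * m i" using ai finA[OF xX] by (simp add: m_def x_def)
      finally show ?thesis .
    qed
    have "obj (\<mu> t x) = ell i * m i + c * D x (vec_lambda (\<mu> t x)) (vec_lambda (\<mu> 1 x))"
      unfolding obj_def omd_obj_def sumeq c_def by (simp add: D_def bregman_same)
    then show "q t i \<le> ell i * m i + lam1 * CPsi" using st cD by linarith
  qed
  define r where "r = (\<lambda>i j. (\<Prod>l\<in>{Suc i..j}. m l) / (\<Prod>l\<in>{i..j}. s l))"
  have MAIN: "ell h \<le> K * (\<Sum>j\<in>{h..H}. r h j)"
  proof -
    have hH: "h \<le> H" using h by simp
    show ?thesis using hH
    proof (induction h rule: inc_induct)
      case base
      have "ell H \<le> 1 / s H" unfolding ell_eq using q_last t trj[of H] spos[of H] h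
        by (auto intro!: divide_right_mono)
      also have "\<dots> \<le> K / s H" using K1 spos[of H] h by (auto intro!: divide_right_mono)
      also have "\<dots> = K * (\<Sum>j\<in>{H..H}. r H j)" by (simp add: r_def)
      finally show ?case .
    next
      case (step n)
      have n: "n \<in> {1..H}" "Suc n \<in> {1..H}" using step.hyps h by auto
      have q1: "q t (Suc n) \<le> ell (Suc n) * m (Suc n) + lam1 * CPsi" using Q[OF n(2)] .
      have "ell (Suc n) * m (Suc n) \<le> K * (\<Sum>j\<in>{Suc n..H}. r (Suc n) j) * m (Suc n)"
        using step.IH mb[OF n(2)] by (intro mult_right_mono) auto
      then have num: "L t n + q t (Suc n) \<le> K * (1 + (\<Sum>j\<in>{Suc n..H}. m (Suc n) * r (Suc n) j))"
        using q1 trj[OF n(1)] unfolding K_def by (simp add: sum_distrib_left algebra_simps)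
      have rsplit: "\<And>j. j \<in> {Suc n..H} \<Longrightarrow> r n j = m (Suc n) * r (Suc n) j / s n"
      proof -
        fix j assume j: "j \<in> {Suc n..H}"
        have "(\<Prod>l\<in>{Suc n..j}. m l) = m (Suc n) * (\<Prod>l\<in>{Suc (Suc n)..j}. m l)"
          using j by (simp add: prod.atLeast_Suc_atMost)
        moreover have "(\<Prod>l\<in>{n..j}. s l) = s n * (\<Prod>l\<in>{Suc n..j}. s l)"
          using j by (simp add: prod.atLeast_Suc_atMost)
        ultimately show "r n j = m (Suc n) * r (Suc n) j / s n" unfolding r_def by simp
      qed
      have "(\<Sum>j\<in>{n..H}. r n j) = r n n + (\<Sum>j\<in>{Suc n..H}. r n j)"
        using step.hyps by (simp add: sum.atLeast_Suc_atMost)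
      also have "\<dots> = (1 + (\<Sum>j\<in>{Suc n..H}. m (Suc n) * r (Suc n) j)) / s n"
        using rsplit by (simp add: r_def add_divide_distrib sum_divide_distrib)
      finally have rs: "(\<Sum>j\<in>{n..H}. r n j) = (1 + (\<Sum>j\<in>{Suc n..H}. m (Suc n) * r (Suc n) j)) / s n" .
      have "ell n \<le> K * (1 + (\<Sum>j\<in>{Suc n..H}. m (Suc n) * r (Suc n) j)) / s n"
        unfolding ell_eq using num spos[OF n(1)] by (intro divide_right_mono) auto
      then show ?case using rs by simp
    qed
  qed
  define xh where "xh = tx t h"
  have xhX: "xh \<in> X" and ah: "ta t h \<in> A xh" and dxh: "depth xh = h" using trj h xh_def by auto
  define \<nu> where "\<nu> = (\<lambda>y b. if y = xh then (if b = ta t h then 1 else 0) else \<mu> t y b)"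
  have polnu: "policy X A \<nu>"
    unfolding policy_def
  proof
    fix y assume y: "y \<in> X"
    show "\<nu> y \<in> prob_simplex (A y)"
    proof (cases "y = xh")
      case True
      then show ?thesis using ah finA[OF y] by (auto simp: \<nu>_def prob_simplex_def)
    next
      case False
      then show ?thesis using polt y by (auto simp: \<nu>_def policy_def)
    qed
  qed
  define f where "f = (\<lambda>(x', a'). mu_from par depth \<nu> xh x' a' / mu_from par depth \<mu>s xh x' a')"
  have hp: "\<And>j k. j \<in> {h..H} \<Longrightarrow> k \<in> {0..j-h} \<Longrightarrow> hpair par k (tx t j, ta t j) = (tx t (j-k), ta t (j-k))"
  proof -
    fix j k assume j: "j \<in> {h..H}" and k: "k \<in> {0..j-h}"
    have "k < j" "j \<le> H" using j k h by auto
    then show "hpair par k (tx t j, ta t j) = (tx t (j-k), ta t (j-k))"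
      using traj_hpair[OF trt] by blast
  qed
  have fj: "\<And>j. j \<in> {h..H} \<Longrightarrow> f (tx t j, ta t j) = r h j"
  proof -
    fix j assume j: "j \<in> {h..H}"
    have "mu_from par depth \<nu> xh (tx t j) (ta t j) = (\<Prod>k\<in>{0..j-h}. \<nu> (tx t (j-k)) (ta t (j-k)))"
      unfolding mu_from_def dxh using trj[of j] j h hp[OF j] by (auto intro!: prod.cong)
    also have "\<dots> = (\<Prod>l\<in>{h..j}. \<nu> (tx t l) (ta t l))"
      using j by (intro prod_rev_reindex[where g = "\<lambda>l. \<nu> (tx t l) (ta t l)"]) auto
    also have "\<dots> = \<nu> (tx t h) (ta t h) * (\<Prod>l\<in>{Suc h..j}. \<nu> (tx t l) (ta t l))"
      using j by (simp add: prod.atLeast_Suc_atMost)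
    also have "\<dots> = (\<Prod>l\<in>{Suc h..j}. m l)"
    proof -
      have "\<And>l. l \<in> {Suc h..j} \<Longrightarrow> \<nu> (tx t l) (ta t l) = m l"
      proof -
        fix l assume l: "l \<in> {Suc h..j}"
        have "depth (tx t l) = l" using trj[of l] l j h by auto
        then have "tx t l \<noteq> xh" using dxh l by auto
        then show "\<nu> (tx t l) (ta t l) = m l" by (simp add: \<nu>_def m_def)
      qed
      then show ?thesis by (simp add: \<nu>_def xh_def)
    qed
    finally have num: "mu_from par depth \<nu> xh (tx t j) (ta t j) = (\<Prod>l\<in>{Suc h..j}. m l)" .
    have "mu_from par depth \<mu>s xh (tx t j) (ta t j) = (\<Prod>k\<in>{0..j-h}. \<mu>s (tx t (j-k)) (ta t (j-k)))"
      unfolding mu_from_def dxh using trj[of j] j h hp[OF j] by (auto intro!: prod.cong)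
    also have "\<dots> = (\<Prod>l\<in>{h..j}. s l)"
      unfolding s_def using j by (intro prod_rev_reindex[where g = "\<lambda>l. \<mu>s (tx t l) (ta t l)"]) auto
    finally have den: "mu_from par depth \<mu>s xh (tx t j) (ta t j) = (\<Prod>l\<in>{h..j}. s l)" .
    show "f (tx t j, ta t j) = r h j" unfolding f_def r_def using num den by simp
  qed
  define SX where "SX = {x'\<in>X. in_history par depth xh x'}"
  have finSig: "finite (Sigma SX A)"
  proof (rule finite_SigmaI)
    show "finite SX" unfolding SX_def using finX by simp
    show "\<And>a. a \<in> SX \<Longrightarrow> finite (A a)" unfolding SX_def using finA by simp
  qed
  have sub: "(\<lambda>j. (tx t j, ta t j)) ` {h..H} \<subseteq> Sigma SX A"
  proof
    fix p assume "p \<in> (\<lambda>j. (tx t j, ta t j)) ` {h..H}"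
    then obtain j where j: "j \<in> {h..H}" and p: "p = (tx t j, ta t j)" by blast
    have tj: "tx t j \<in> X" "depth (tx t j) = j" "ta t j \<in> A (tx t j)" using trj[of j] j h by auto
    have "hpair par (j - h) (tx t j, ta t j) = (tx t (j - (j - h)), ta t (j - (j - h)))" using hp[OF j, of "j-h"] by simp
    moreover have "j - (j - h) = h" using j by simp
    ultimately have e1: "fst (hpair par (j - h) (tx t j, ta t j)) = xh" by (simp add: xh_def)
    have lt: "j - h < depth (tx t j)" using tj j h by simp
    have "in_history par depth xh (tx t j)"
      unfolding in_history_def using e1 lt by blast
    then show "p \<in> Sigma SX A" using p tj unfolding SX_def by auto
  qed
  have injj: "inj_on (\<lambda>j. (tx t j, ta t j)) {h..H}"
  proof (rule inj_onI)
    fix i j assume ij: "i \<in> {h..H}" "j \<in> {h..H}" and pe: "(tx t i, ta t i) = (tx t j, ta t j)"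
    have i1: "i \<in> {1..H}" and j1: "j \<in> {1..H}" using ij h by auto
    have "i = depth (tx t i)" using trj[OF i1] by simp
    also have "tx t i = tx t j" using pe by simp
    also have "depth (tx t j) = j" using trj[OF j1] by simp
    finally show "i = j" .
  qed
  have fnn: "\<And>p. p \<in> Sigma SX A \<Longrightarrow> 0 \<le> f p"
  proof -
    fix p assume "p \<in> Sigma SX A"
    then obtain x' a' where p: "p = (x', a')" "x' \<in> SX" by (cases p) auto
    then have x'X: "x' \<in> X" unfolding SX_def by simp
    have sp: "policy X A \<mu>s" using samp by (simp add: positive_policy_def)
    have "0 \<le> mu_from par depth \<nu> xh x' a'" "0 \<le> mu_from par depth \<mu>s xh x' a'"
      using mu_from_bounds[OF game polnu xhX x'X] mu_from_bounds[OF game sp xhX x'X] by simp_all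
    then show "0 \<le> f p" unfolding f_def p by simp
  qed
  have "(\<Sum>j\<in>{h..H}. r h j) = (\<Sum>j\<in>{h..H}. f (tx t j, ta t j))" using fj by simp
  also have "\<dots> = (\<Sum>p\<in>(\<lambda>j. (tx t j, ta t j)) ` {h..H}. f p)" using sum.reindex[OF injj, of f] by simp
  also have "\<dots> \<le> (\<Sum>p\<in>Sigma SX A. f p)" using sub fnn finSig by (intro sum_mono2) auto
  also have "\<dots> = (\<Sum>x'\<in>SX. \<Sum>a'\<in>A x'. mu_from par depth \<nu> xh x' a' / mu_from par depth \<mu>s xh x' a')"
    unfolding f_def using finX finA by (subst sum.Sigma) (auto simp: SX_def)
  also have "\<dots> \<le> kappa X A depth par \<mu>s xh"
    unfolding SX_def using kappa_ge[OF game _ polnu xhX] samp by (auto simp: positive_policy_def)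
  finally have rk: "(\<Sum>j\<in>{h..H}. r h j) \<le> kappa X A depth par \<mu>s (tx t h)" by (simp add: xh_def)
  have "ell h \<le> K * kappa X A depth par \<mu>s (tx t h)"
    using MAIN rk K1 by (meson dual_order.trans mult_left_mono zero_le_one order.trans)
  then show "loss_est tx ta L q \<mu>s t h (ta t h) \<le> (1 + lam1 * CPsi) * kappa X A depth par \<mu>s (tx t h)"
    by (simp add: ell_def K_def)
qed

end
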